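(* Let $G$ be a bipartite graph between a hidden set $U$ with $|U|=n$ and an observed set $V$, with edge weights $w(u,v)\in\{-1,+1\}$. For $v\in V$ let $B(v)\subseteq U$ be its set of neighbours and $B^+(v)=\{u\in B(v): w(u,v)=+1\}$. Assume $|B(v)|\le d$ for all $v\in V$. Let $k=\rho n$ be a positive integer, let $S$ be a uniformly random $k$-subset of $U$, $h$ its indicator vector, and $y_v=\operatorname{sgn}\big(\sum_{u\in B(v)}w(u,v)h_u\big)$ for $v\in V$. Let $u\neq v$ in $V$. (a) If $B^+(u)\cap B^+(v)\ne\emptyset$ and $2\rho d\le 0.1$, then $\Pr[y_u=y_v=1]\ge 0.9\rho$. (b) If $B^+(u)\cap B^+(v)=\emptyset$, then $\Pr[y_u=y_v=1]\le \rho^2|B^+(u)|\,|B^+(v)|\le(\rho d)^2$.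
   Context: $\operatorname{sgn}(x)=1$ if $x>0$ and $0$ otherwise. Two observed nodes $u,v$ are called related if they have a common hidden neighbour joined to both by $+1$ edges, i.e. $B^+(u)\cap B^+(v)\neq\emptyset$. *)

theory Defs
  imports "HOL-Probability.Probability"
begin

definition sgnp :: "int \<Rightarrow> int" where
  "sgnp x = (if x > 0 then 1 else 0)"

definition Bplus :: "('v \<Rightarrow> 'u set) \<Rightarrow> ('u \<Rightarrow> 'v \<Rightarrow> int) \<Rightarrow> 'v \<Rightarrow> 'u set" where
  "Bplus B w v = {u \<in> B v. w u v = 1}"

definition obs :: "('v \<Rightarrow> 'u set) \<Rightarrow> ('u \<Rightarrow> 'v \<Rightarrow> int) \<Rightarrow> 'u set \<Rightarrow> 'v \<Rightarrow> int" where
  "obs B w S v = sgnp (\<Sum>u\<in>B v. w u v * (if u \<in> S then 1 else 0))"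

definition ksubsets_pmf :: "'u set \<Rightarrow> nat \<Rightarrow> 'u set pmf" where
  "ksubsets_pmf U k = pmf_of_set {S. S \<subseteq> U \<and> card S = k}"

end

theory Submission
  imports Defs
begin

lemma count_sup:
  assumes fin: "finite U" and AU: "A \<subseteq> U" and Ak: "card A \<le> k"
  shows "card {S. S \<subseteq> U \<and> card S = k \<and> A \<subseteq> S} = (card U - card A) choose (k - card A)"
proof -
  have finA: "finite A" using fin AU finite_subset by blast
  have "bij_betw (\<lambda>T. A \<union> T) {T. T \<subseteq> U - A \<and> card T = k - card A} {S. S \<subseteq> U \<and> card S = k \<and> A \<subseteq> S}"
  proof (rule bij_betw_byWitness[where f'="\<lambda>S. S - A"])
    show "\<forall>T\<in>{T. T \<subseteq> U - A \<and> card T = k - card A}. A \<union> T - A = T" by auto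
    show "\<forall>S\<in>{S. S \<subseteq> U \<and> card S = k \<and> A \<subseteq> S}. A \<union> (S - A) = S" by auto
    show "(\<lambda>T. A \<union> T) ` {T. T \<subseteq> U - A \<and> card T = k - card A} \<subseteq> {S. S \<subseteq> U \<and> card S = k \<and> A \<subseteq> S}"
    proof clarify
      fix T assume T: "T \<subseteq> U - A" "card T = k - card A"
      have "finite T" using T fin finite_subset by blast
      then have "card (A \<union> T) = card A + card T" using T finA by (subst card_Un_disjoint) auto
      then show "A \<union> T \<subseteq> U \<and> card (A \<union> T) = k \<and> A \<subseteq> A \<union> T" using T AU Ak by auto
    qed
    show "(\<lambda>S. S - A) ` {S. S \<subseteq> U \<and> card S = k \<and> A \<subseteq> S} \<subseteq> {T. T \<subseteq> U - A \<and> card T = k - card A}"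
    proof clarify
      fix S assume S: "S \<subseteq> U" "k = card S" "A \<subseteq> S"
      have "finite S" using S fin finite_subset by blast
      then show "S - A \<subseteq> U - A \<and> card (S - A) = card S - card A" using S finA
        by (auto simp: card_Diff_subset)
    qed
  qed
  then have "card {S. S \<subseteq> U \<and> card S = k \<and> A \<subseteq> S} = card {T. T \<subseteq> U - A \<and> card T = k - card A}"
    by (simp add: bij_betw_same_card)
  also have "\<dots> = card (U - A) choose (k - card A)" using fin by (simp add: n_subsets)
  also have "card (U - A) = card U - card A" using AU finA by (simp add: card_Diff_subset)
  finally show ?thesis .
qed

lemma prob_ks:
  assumes fin: "finite U" and kn: "k \<le> card U"
  shows "measure_pmf.prob (ksubsets_pmf U k) E = card {S. S \<subseteq> U \<and> card S = k \<and> S \<in> E} / (card U choose k)"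
proof -
  let ?K = "{S. S \<subseteq> U \<and> card S = k}"
  have "finite ?K" using fin by simp
  moreover have "?K \<noteq> {}" using kn fin by (metis (mono_tags, lifting) empty_Collect_eq obtain_subset_with_card_n)
  ultimately have "measure_pmf.prob (ksubsets_pmf U k) E = card (?K \<inter> E) / card ?K"
    unfolding ksubsets_pmf_def by (simp add: measure_pmf_of_set)
  moreover have "?K \<inter> E = {S. S \<subseteq> U \<and> card S = k \<and> S \<in> E}" by auto
  ultimately show ?thesis using fin by (simp add: n_subsets)
qed

lemma aux_mult:
  fixes a b c d x y z :: nat
  assumes e1: "a * x = b * y" and e2: "c * y = d * z"
  shows "z * (b * d) = x * (a * c)"
proof -
  have "x * (a * c) = (a * x) * c" by (simp add: ac_simps)
  also have "\<dots> = (b * y) * c" using e1 by simp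
  also have "\<dots> = b * (c * y)" by (simp add: ac_simps)
  also have "\<dots> = b * (d * z)" using e2 by simp
  also have "\<dots> = z * (b * d)" by (simp add: ac_simps)
  finally show ?thesis by simp
qed

lemma aux_div:
  fixes a b y z :: nat
  assumes e: "a * y = b * z" and y: "0 < y" and b: "0 < b"
  shows "real z / real y = real a / real b"
proof -
  have "real a * real y = real b * real z" using e by (metis of_nat_mult)
  then show ?thesis using y b by (simp add: field_simps)
qed

lemma aux_div2:
  fixes c C X Y :: real
  assumes "c * X = C * Y" "0 < C" "0 < X"
  shows "c / C = Y / X"
  using assms by (simp add: field_simps)

lemma aux_frac:
  fixes K N :: real
  assumes "2 \<le> K" "K \<le> N"
  shows "K * (K - 1) / (N * (N - 1)) \<le> (K / N)^2"
proof -
  have N1: "0 < N - 1" "0 < N" using assms by auto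
  have e: "K * (K - 1) / (N * (N - 1)) = (K / N) * ((K - 1) / (N - 1))" by simp
  have h: "(K - 1) * N \<le> K * (N - 1)" using assms by (simp add: algebra_simps)
  have "(K - 1) / (N - 1) \<le> K / N"
  proof -
    have p: "0 < (N - 1) * N" using N1 by (rule mult_pos_pos)
    have n: "(K - 1) * N - K * (N - 1) \<le> 0" using h by linarith
    have "((K - 1) * N - K * (N - 1)) / ((N - 1) * N) \<le> 0"
      by (rule divide_nonpos_pos[OF n p])
    then show ?thesis using N1 by (simp only: frac_le_eq[of "N - 1" N "K - 1" K])
  qed
  moreover have kn: "0 \<le> K / N" using N1 assms by simp
  ultimately have "(K / N) * ((K - 1) / (N - 1)) \<le> (K / N) * (K / N)"
    by (rule mult_left_mono)
  then show ?thesis by (simp only: e power2_eq_square)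
qed

lemma single_prob:
  assumes fin: "finite U" and kn: "k \<le> card U" and k0: "0 < k" and i: "i \<in> U"
  shows "measure_pmf.prob (ksubsets_pmf U k) {S. i \<in> S} = real k / real (card U)"
proof -
  have c: "card {S. S \<subseteq> U \<and> card S = k \<and> {i} \<subseteq> S} = (card U - 1) choose (k - 1)"
    using count_sup[of U "{i}" k] fin i k0 by simp
  obtain n' where n': "card U = Suc n'" using kn k0 by (cases "card U") auto
  obtain k' where k': "k = Suc k'" using k0 by (cases k) auto
  have e: "Suc k' * (Suc n' choose Suc k') = Suc n' * (n' choose k')" by (rule Suc_times_binomial)
  have pos: "(Suc n' choose Suc k') > 0" using kn n' k' by simp
  have "measure_pmf.prob (ksubsets_pmf U k) {S. i \<in> S} = real (n' choose k') / real (Suc n' choose Suc k')"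
    using prob_ks[OF fin kn, of "{S. i \<in> S}"] c n' k' by simp
  also have "\<dots> = real (Suc k') / real (Suc n')"
    by (rule aux_div[OF e pos]) simp
  finally show ?thesis using n' k' by simp
qed

lemma pair_prob:
  assumes fin: "finite U" and kn: "k \<le> card U" and i: "i \<in> U" and j: "j \<in> U" and ij: "i \<noteq> j"
  shows "measure_pmf.prob (ksubsets_pmf U k) {S. i \<in> S \<and> j \<in> S} \<le> (real k / real (card U))^2"
proof (cases "k \<ge> 2")
  case False
  have e0: "{S. S \<subseteq> U \<and> card S = k \<and> S \<in> {S. i \<in> S \<and> j \<in> S}} = {}"
  proof (rule ccontr)
    assume "\<not> ?thesis"
    then obtain S where S: "S \<subseteq> U" "card S = k" "i \<in> S" "j \<in> S" by auto
    have "finite S" using S fin finite_subset by blast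
    then have "card {i,j} \<le> card S" using S by (intro card_mono) auto
    then show False using S ij False by simp
  qed
  have "measure_pmf.prob (ksubsets_pmf U k) {S. i \<in> S \<and> j \<in> S} = 0"
    using prob_ks[OF fin kn, of "{S. i \<in> S \<and> j \<in> S}"] unfolding e0 by simp
  then show ?thesis by simp
next
  case True
  have cij: "card {i,j} = 2" using ij by simp
  have c: "card {S. S \<subseteq> U \<and> card S = k \<and> {i,j} \<subseteq> S} = (card U - 2) choose (k - 2)"
    using count_sup[of U "{i,j}" k] fin i j True cij by simp
  obtain n' where n': "card U = Suc (Suc n')" using kn True by (cases "card U"; cases "card U - 1") auto
  obtain k' where k': "k = Suc (Suc k')" using True by (cases k; cases "k - 1") auto
  have e1: "Suc (Suc k') * (Suc (Suc n') choose Suc (Suc k')) = Suc (Suc n') * (Suc n' choose Suc k')" by (rule Suc_times_binomial)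
  have e2: "Suc k' * (Suc n' choose Suc k') = Suc n' * (n' choose k')" by (rule Suc_times_binomial)
  have pos: "(Suc (Suc n') choose Suc (Suc k')) > 0" using kn n' k' by simp
  define C where "C = real (Suc (Suc n') choose Suc (Suc k'))"
  define c where "c = real (n' choose k')"
  have eq: "c * (real (Suc (Suc n')) * real (Suc n')) = C * (real (Suc (Suc k')) * real (Suc k'))"
  proof -
    have "(n' choose k') * (Suc (Suc n') * Suc n') = (Suc (Suc n') choose Suc (Suc k')) * (Suc (Suc k') * Suc k')"
      by (rule aux_mult[OF e1 e2])
    then show ?thesis unfolding c_def C_def by (metis of_nat_mult)
  qed
  have Cp: "C > 0" unfolding C_def using pos by (simp only: of_nat_0_less_iff)
  have "measure_pmf.prob (ksubsets_pmf U k) {S. i \<in> S \<and> j \<in> S} = c / C"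
    using prob_ks[OF fin kn, of "{S. i \<in> S \<and> j \<in> S}"] c n' k' unfolding c_def C_def by simp
  also have "\<dots> = (real (Suc (Suc k')) * real (Suc k')) / (real (Suc (Suc n')) * real (Suc n'))"
    by (rule aux_div2[OF eq Cp]) simp
  also have "\<dots> \<le> (real (Suc (Suc k')) / real (Suc (Suc n')))^2"
  proof -
    have a: "k' \<le> n'" using kn n' k' by simp
    have e1: "real (Suc (Suc k')) - 1 = real (Suc k')" "real (Suc (Suc n')) - 1 = real (Suc n')" by simp_all
    have "2 \<le> real (Suc (Suc k'))" "real (Suc (Suc k')) \<le> real (Suc (Suc n'))" using a by simp_all
    from aux_frac[OF this] show ?thesis unfolding e1 .
  qed
  finally show ?thesis using n' k' by simp
qed


lemma obs_imp:
  assumes fin: "finite (B v)" and wt: "\<And>u. u \<in> B v \<Longrightarrow> w u v \<in> {-1, 1}"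
    and o: "obs B w S v = 1"
  shows "\<exists>i \<in> Bplus B w v. i \<in> S"
proof (rule ccontr)
  assume na: "\<not> ?thesis"
  have "(\<Sum>u\<in>B v. w u v * (if u \<in> S then 1 else 0)) \<le> 0"
  proof (rule sum_nonpos)
    fix u assume u: "u \<in> B v"
    show "w u v * (if u \<in> S then 1 else 0) \<le> 0"
    proof (cases "u \<in> S")
      case True
      then have "u \<notin> Bplus B w v" using na by auto
      then have "w u v = -1" using wt[OF u] u by (auto simp: Bplus_def)
      then show ?thesis using True by simp
    qed simp
  qed
  then have "obs B w S v = 0" unfolding obs_def sgnp_def by simp
  then show False using o by simp
qed

lemma obs_suff:
  assumes fin: "finite (B v)" and wt: "\<And>u. u \<in> B v \<Longrightarrow> w u v \<in> {-1, 1}"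
    and u0: "u0 \<in> Bplus B w v" and u0S: "u0 \<in> S"
    and neg: "\<And>u. u \<in> B v - Bplus B w v \<Longrightarrow> u \<notin> S"
  shows "obs B w S v = 1"
proof -
  let ?f = "\<lambda>u. w u v * (if u \<in> S then 1 else 0)"
  have nn: "\<And>u. u \<in> B v \<Longrightarrow> 0 \<le> ?f u"
  proof -
    fix u assume u: "u \<in> B v"
    show "0 \<le> ?f u"
    proof (cases "u \<in> S")
      case True
      then have "u \<in> Bplus B w v" using neg u by blast
      then show ?thesis using True by (simp add: Bplus_def)
    qed simp
  qed
  have u0B: "u0 \<in> B v" and w1: "w u0 v = 1" using u0 by (auto simp: Bplus_def)
  have "?f u0 \<le> (\<Sum>u\<in>B v. ?f u)" using fin u0B nn by (intro member_le_sum) auto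
  then have "0 < (\<Sum>u\<in>B v. ?f u)" using w1 u0S by simp
  then show ?thesis unfolding obs_def sgnp_def by simp
qed

theorem mainTheorem3:
  fixes U :: "'u set" and V :: "'v set" and B :: "'v \<Rightarrow> 'u set"
    and w :: "'u \<Rightarrow> 'v \<Rightarrow> int" and n k d :: nat and \<rho> :: real and a b :: 'v
  assumes finU: "finite U" and cardU: "card U = n"
    and bip: "\<And>v. v \<in> V \<Longrightarrow> B v \<subseteq> U"
    and wts: "\<And>v u. v \<in> V \<Longrightarrow> u \<in> B v \<Longrightarrow> w u v \<in> {-1, 1}"
    and deg: "\<And>v. v \<in> V \<Longrightarrow> card (B v) \<le> d"
    and kpos: "0 < k" and kle: "k \<le> n" and rho: "real k = \<rho> * real n"
    and aV: "a \<in> V" and bV: "b \<in> V" and ab: "a \<noteq> b"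
  shows "(Bplus B w a \<inter> Bplus B w b \<noteq> {} \<and> 2 * \<rho> * real d \<le> 0.1 \<longrightarrow>
            measure_pmf.prob (ksubsets_pmf U k)
              {S. obs B w S a = 1 \<and> obs B w S b = 1} \<ge> 0.9 * \<rho>)
       \<and> (Bplus B w a \<inter> Bplus B w b = {} \<longrightarrow>
            measure_pmf.prob (ksubsets_pmf U k)
              {S. obs B w S a = 1 \<and> obs B w S b = 1}
              \<le> \<rho>^2 * real (card (Bplus B w a)) * real (card (Bplus B w b))
            \<and> \<rho>^2 * real (card (Bplus B w a)) * real (card (Bplus B w b)) \<le> (\<rho> * real d)^2)"
proof -
  let ?P = "ksubsets_pmf U k"
  let ?E = "{S. obs B w S a = 1 \<and> obs B w S b = 1}"
  have npos: "0 < n" using kpos kle by simp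
  have rhoe: "\<rho> = real k / real n" using rho npos by (simp add: field_simps)
  have rho0: "0 \<le> \<rho>" using rhoe by simp
  have kn: "k \<le> card U" using kle cardU by simp
  have BaU: "B a \<subseteq> U" and BbU: "B b \<subseteq> U" using bip aV bV by auto
  have finBa: "finite (B a)" and finBb: "finite (B b)" using BaU BbU finU finite_subset by auto
  have wa: "\<And>u. u \<in> B a \<Longrightarrow> w u a \<in> {-1, 1}" using wts aV by auto
  have wb: "\<And>u. u \<in> B b \<Longrightarrow> w u b \<in> {-1, 1}" using wts bV by auto
  have BpaB: "Bplus B w a \<subseteq> B a" and BpbB: "Bplus B w b \<subseteq> B b" by (auto simp: Bplus_def)
  have pairb: "\<And>i j. i \<in> U \<Longrightarrow> j \<in> U \<Longrightarrow> i \<noteq> j \<Longrightarrow> measure_pmf.prob ?P {S. i \<in> S \<and> j \<in> S} \<le> \<rho>^2"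
    using pair_prob[OF finU kn] cardU rhoe by simp
  show ?thesis
  proof (intro conjI impI)
    assume H: "Bplus B w a \<inter> Bplus B w b \<noteq> {} \<and> 2 * \<rho> * real d \<le> 0.1"
    then obtain u0 where u0a: "u0 \<in> Bplus B w a" and u0b: "u0 \<in> Bplus B w b" by blast
    have u0U: "u0 \<in> U" using u0a BpaB BaU by blast
    define N where "N = (B a - Bplus B w a) \<union> (B b - Bplus B w b)"
    have finN: "finite N" unfolding N_def using finBa finBb by simp
    have NU: "N \<subseteq> U" unfolding N_def using BaU BbU by blast
    have u0N: "u0 \<notin> N" unfolding N_def using u0a u0b by blast
    have cN: "card N \<le> 2 * d"
    proof -
      have "card N \<le> card (B a - Bplus B w a) + card (B b - Bplus B w b)" unfolding N_def by (rule card_Un_le)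
      also have "\<dots> \<le> card (B a) + card (B b)" using finBa finBb by (intro add_mono card_mono) auto
      also have "\<dots> \<le> d + d" using deg aV bV by (intro add_mono) auto
      finally show ?thesis by simp
    qed
    let ?A0 = "{S. u0 \<in> S}"
    let ?C = "\<Union>x\<in>N. {S. u0 \<in> S \<and> x \<in> S}"
    have sub: "?A0 - ?C \<subseteq> ?E"
    proof
      fix S assume S: "S \<in> ?A0 - ?C"
      then have u0S: "u0 \<in> S" and nS: "\<And>x. x \<in> N \<Longrightarrow> x \<notin> S" by auto
      have nSa: "\<And>x. x \<in> B a - Bplus B w a \<Longrightarrow> x \<notin> S" using nS unfolding N_def by blast
      have nSb: "\<And>x. x \<in> B b - Bplus B w b \<Longrightarrow> x \<notin> S" using nS unfolding N_def by blast
      have "obs B w S a = 1" by (rule obs_suff[OF finBa wa u0a u0S nSa])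
      moreover have "obs B w S b = 1" by (rule obs_suff[OF finBb wb u0b u0S nSb])
      ultimately show "S \<in> ?E" by simp
    qed
    have pC: "measure_pmf.prob ?P ?C \<le> real (card N) * \<rho>^2"
    proof -
      have "measure_pmf.prob ?P ?C \<le> (\<Sum>x\<in>N. measure_pmf.prob ?P {S. u0 \<in> S \<and> x \<in> S})"
        using finN by (intro measure_pmf.finite_measure_subadditive_finite) auto
      also have "\<dots> \<le> real (card N) * \<rho>^2"
        using pairb u0U NU u0N by (intro sum_bounded_above) auto
      finally show ?thesis .
    qed
    have pA: "measure_pmf.prob ?P ?A0 = \<rho>"
      using single_prob[OF finU kn kpos u0U] cardU rhoe by simp
    have "measure_pmf.prob ?P (?A0 - ?C) = measure_pmf.prob ?P ?A0 - measure_pmf.prob ?P (?A0 \<inter> ?C)"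
      by (rule measure_pmf.finite_measure_Diff') auto
    also have "measure_pmf.prob ?P (?A0 \<inter> ?C) \<le> measure_pmf.prob ?P ?C"
      by (rule measure_pmf.finite_measure_mono) auto
    ultimately have "measure_pmf.prob ?P (?A0 - ?C) \<ge> \<rho> - real (card N) * \<rho>^2" using pA pC by linarith
    moreover have "measure_pmf.prob ?P (?A0 - ?C) \<le> measure_pmf.prob ?P ?E"
      using sub by (rule measure_pmf.finite_measure_mono) auto
    moreover have "real (card N) * \<rho>^2 \<le> 0.1 * \<rho>"
    proof -
      have "real (card N) * \<rho>^2 \<le> real (2 * d) * \<rho>^2" using cN by (intro mult_right_mono) auto
      also have "\<dots> = \<rho> * (2 * \<rho> * real d)" by (simp add: power2_eq_square)
      also have "\<dots> \<le> \<rho> * 0.1" using H rho0 by (intro mult_left_mono) auto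
      finally show ?thesis by simp
    qed
    ultimately show "measure_pmf.prob ?P ?E \<ge> 0.9 * \<rho>" by linarith
  next
    assume D: "Bplus B w a \<inter> Bplus B w b = {}"
    let ?I = "Bplus B w a \<times> Bplus B w b"
    have finI: "finite ?I" using finBa finBb BpaB BpbB finite_subset by blast
    have "?E \<subseteq> (\<Union>p\<in>?I. {S. fst p \<in> S \<and> snd p \<in> S})"
    proof
      fix S assume "S \<in> ?E"
      then obtain i j where "i \<in> Bplus B w a" "i \<in> S" "j \<in> Bplus B w b" "j \<in> S"
        using obs_imp[of B a w S, OF finBa wa] obs_imp[of B b w S, OF finBb wb] by auto
      then show "S \<in> (\<Union>p\<in>?I. {S. fst p \<in> S \<and> snd p \<in> S})" by force
    qed
    then have "measure_pmf.prob ?P ?E \<le> measure_pmf.prob ?P (\<Union>p\<in>?I. {S. fst p \<in> S \<and> snd p \<in> S})"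
      by (rule measure_pmf.finite_measure_mono) auto
    also have "\<dots> \<le> (\<Sum>p\<in>?I. measure_pmf.prob ?P {S. fst p \<in> S \<and> snd p \<in> S})"
      using finI by (intro measure_pmf.finite_measure_subadditive_finite) auto
    also have "\<dots> \<le> real (card ?I) * \<rho>^2"
    proof (rule sum_bounded_above)
      fix p assume p: "p \<in> ?I"
      then have "fst p \<in> U" "snd p \<in> U" "fst p \<noteq> snd p" using BpaB BpbB BaU BbU D by auto
      then show "measure_pmf.prob ?P {S. fst p \<in> S \<and> snd p \<in> S} \<le> \<rho>^2" using pairb by blast
    qed
    also have "\<dots> = \<rho>^2 * real (card (Bplus B w a)) * real (card (Bplus B w b))"
      by (simp add: card_cartesian_product)
    finally show "measure_pmf.prob ?P ?E \<le> \<rho>^2 * real (card (Bplus B w a)) * real (card (Bplus B w b))" .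
  next
    have ca: "card (Bplus B w a) \<le> d" using card_mono[OF finBa BpaB] deg[OF aV] by linarith
    have cb: "card (Bplus B w b) \<le> d" using card_mono[OF finBb BpbB] deg[OF bV] by linarith
    have "real (card (Bplus B w a)) * real (card (Bplus B w b)) \<le> real d * real d"
      using ca cb by (intro mult_mono) auto
    then have "\<rho>^2 * (real (card (Bplus B w a)) * real (card (Bplus B w b))) \<le> \<rho>^2 * (real d * real d)"
      by (intro mult_left_mono) auto
    then show "\<rho>^2 * real (card (Bplus B w a)) * real (card (Bplus B w b)) \<le> (\<rho> * real d)^2"
      by (simp add: power2_eq_square mult_ac)
  qed
qed

end
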